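(* Fix $K$ with $K\log\log p\le\log p$. Suppose $\mu\in\mathbb{R}^{p\times K}$ has the prior described in the context, with hyperparameters $\kappa>0$ and $\lambda_0\gg\lambda_1>0$, and let $\delta=(1+\kappa)\log p/\lambda_0$. Then there exist constants $\beta,c>0$ such that, for all sufficiently large $n$, $$\Pi\left(|\mathrm{supp}_\delta(\mu)|\ge\beta\left(s+\frac{n\log K}{\log p}\right)\right)\le\exp\{-c(s\log p+n\log K)\}.$$
   Context: Prior on $\mu=[\mu_1,\dots,\mu_K]\in\mathbb R^{p\times K}$ (given $K$): $\theta\sim\mathrm{Beta}(1,\beta_\theta)$ with $\beta_\theta=p^{1+\kappa}\log p$; given $\theta$, $\xi_1,\dots,\xi_p$ i.i.d. $\mathrm{Bernoulli}(\theta)$; given $\xi$, the entries $\mu_{kj}$ are independent with density $(1-\xi_j)\psi(\cdot\mid\lambda_0)+\xi_j\psi(\cdot\mid\lambda_1)$, $\psi(x\mid\lambda)=(\lambda/2)e^{-\lambda|x|}$. Soft support: for $\delta>0$, $\mathrm{supp}_\delta(\mu)=\{j\in[p]:\|\mu_{j\cdot}\|_1>\delta\}$, where $\mu_{j\cdot}$ is the $j$th row of $\mu$. Asymptotics: $n\to\infty$ with $p=p_n\to\infty$, $s=s_n\to\infty$, $(s+n\log K/\log p)/p\to0$. *)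

theory Defs
  imports "HOL-Probability.Probability"
begin

definition laplace_density :: "real \<Rightarrow> real \<Rightarrow> real" where
  "laplace_density lam x = lam / 2 * exp (- lam * \<bar>x\<bar>)"

definition beta_density :: "real \<Rightarrow> real \<Rightarrow> real \<Rightarrow> real" where
  "beta_density a b x =
     (if 0 < x \<and> x < 1 then x powr (a - 1) * (1 - x) powr (b - 1) / Beta a b else 0)"

definition beta_theta :: "nat \<Rightarrow> real \<Rightarrow> real" where
  "beta_theta p \<kappa> = real p powr (1 + \<kappa>) * ln (real p)"

text \<open>The matrix mu is represented as a
  function on index pairs (j,k) with j < p (row / feature) and k < K (column / cluster),
  i.e. mu (j,k) = mu_{kj}.
  theta ~ Beta(1, beta_theta); xi_j i.i.d. Bernoulli(theta) (True = slab);
  given xi, mu (j,k) independent with density psi(. | lambda1) if xi_j else psi(. | lambda0).\<close>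
definition ssl_prior :: "nat \<Rightarrow> nat \<Rightarrow> real \<Rightarrow> real \<Rightarrow> real \<Rightarrow> (nat \<times> nat \<Rightarrow> real) measure" where
  "ssl_prior p K \<kappa> lam0 lam1 =
     density lborel (\<lambda>t. ennreal (beta_density 1 (beta_theta p \<kappa>) t)) \<bind> (\<lambda>\<theta>.
       PiM {..<p} (\<lambda>_. measure_pmf (bernoulli_pmf \<theta>)) \<bind> (\<lambda>\<xi>.
         PiM ({..<p} \<times> {..<K})
           (\<lambda>(j, k). density lborel (\<lambda>x. ennreal (laplace_density (if \<xi> j then lam1 else lam0) x)))))"

definition supp_soft :: "nat \<Rightarrow> nat \<Rightarrow> real \<Rightarrow> (nat \<times> nat \<Rightarrow> real) \<Rightarrow> nat set" where
  "supp_soft p K \<delta> \<mu> = {j \<in> {..<p}. (\<Sum>k<K. \<bar>\<mu> (j, k)\<bar>) > \<delta>}"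

end

theory Submission
  imports Defs "HOL-Real_Asymp.Real_Asymp"
begin


lemma nn_integral_reflect:
  fixes f :: "real \<Rightarrow> ennreal"
  assumes "f \<in> borel_measurable borel"
  shows "(\<integral>\<^sup>+x. f (- x) \<partial>lborel) = (\<integral>\<^sup>+x. f x \<partial>lborel)"
proof -
  have "(\<integral>\<^sup>+x. f x \<partial>lborel) = (\<integral>\<^sup>+x. f x \<partial>distr lborel borel uminus)"
    by (simp add: lborel_distr_uminus)
  also have "\<dots> = (\<integral>\<^sup>+x. f (- x) \<partial>lborel)"
    using assms by (subst nn_integral_distr) auto
  finally show ?thesis by simp
qed

lemma nn_integral_expdens:
  assumes "a > 0"
  shows "(\<integral>\<^sup>+x. ennreal (exponential_density a x) \<partial>lborel) = 1"
proof -
  interpret prob_space "density lborel (exponential_density a)"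
    using prob_space_exponential_density[OF assms] .
  have "emeasure (density lborel (exponential_density a)) UNIV = 1"
    using emeasure_space_1 by simp
  then show ?thesis by (simp add: emeasure_density)
qed

lemma lap_mgf:
  assumes l: "l > 0" and t: "0 \<le> t" "t < l"
  shows "(\<integral>\<^sup>+x. ennreal (laplace_density l x) * ennreal (exp (t * \<bar>x\<bar>)) \<partial>lborel)
         \<le> ennreal (l / (l - t))"
proof -
  define a where "a = l - t"
  have a: "a > 0" using t unfolding a_def by simp
  define e where "e = (\<lambda>x. ennreal (exponential_density a x))"
  have em: "e \<in> borel_measurable borel" unfolding e_def by measurable
  have pt: "ennreal (laplace_density l x) * ennreal (exp (t * \<bar>x\<bar>))
        \<le> ennreal (l / (2*a)) * (e x + e (- x))" for x
  proof -
    have "ennreal (laplace_density l x) * ennreal (exp (t * \<bar>x\<bar>))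
        = ennreal (l / 2 * exp (- a * \<bar>x\<bar>))"
      using l unfolding laplace_density_def a_def
      by (simp add: ennreal_mult'[symmetric] mult.assoc exp_add[symmetric] algebra_simps)
    also have "\<dots> \<le> ennreal (l / (2*a) * (exponential_density a x + exponential_density a (- x)))"
      using a l by (intro ennreal_leI) (auto simp: exponential_density_def field_simps)
    also have "\<dots> = ennreal (l / (2*a)) * (e x + e (- x))"
    proof -
      have nn: "0 \<le> exponential_density a y" for y using a by (simp add: exponential_density_def)
      show ?thesis unfolding e_def
        using a l nn[of x] nn[of "-x"]
        by (subst ennreal_mult) (auto simp: ennreal_plus)
    qed
    finally show ?thesis .
  qed
  have "(\<integral>\<^sup>+x. ennreal (laplace_density l x) * ennreal (exp (t * \<bar>x\<bar>)) \<partial>lborel)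
        \<le> (\<integral>\<^sup>+x. ennreal (l / (2*a)) * (e x + e (- x)) \<partial>lborel)"
    by (intro nn_integral_mono pt)
  also have "\<dots> = ennreal (l / (2*a)) * ((\<integral>\<^sup>+x. e x \<partial>lborel) + (\<integral>\<^sup>+x. e (- x) \<partial>lborel))"
    using em by (simp add: nn_integral_cmult nn_integral_add)
  also have "\<dots> = ennreal (l / (2*a)) * 2"
    using nn_integral_reflect[OF em] nn_integral_expdens[OF a] unfolding e_def
    by simp
  also have "\<dots> = ennreal (l / a)"
    using a l by (subst ennreal_numeral[symmetric], subst ennreal_mult[symmetric]) auto
  finally show ?thesis unfolding a_def .
qed



abbreviation LAP :: "real \<Rightarrow> real measure" where
  "LAP l \<equiv> density lborel (\<lambda>x. ennreal (laplace_density l x))"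

lemma lap_nonpos: "l \<le> 0 \<Longrightarrow> ennreal (laplace_density l x) = 0"
  unfolding laplace_density_def
  by (intro ennreal_neg) (simp add: mult_nonpos_nonneg)

lemma lap_meas[measurable]: "laplace_density l \<in> borel_measurable borel"
  unfolding laplace_density_def by measurable

lemma lap_subprob: "subprob_space (LAP l)"
proof (rule subprob_spaceI)
  show "space (LAP l) \<noteq> {}" by simp
  show "emeasure (LAP l) (space (LAP l)) \<le> 1"
  proof (cases "l > 0")
    case True
    have "emeasure (LAP l) (space (LAP l)) = (\<integral>\<^sup>+x. ennreal (laplace_density l x) * ennreal (exp (0 * \<bar>x\<bar>)) \<partial>lborel)"
      by (simp add: emeasure_density laplace_density_def)
    also have "\<dots> \<le> ennreal (l / (l - 0))" by (rule lap_mgf) (use True in auto)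
    finally show ?thesis using True by simp
  next
    case False
    then show ?thesis by (simp add: emeasure_density lap_nonpos)
  qed
qed

lemma subprob_sigma_finite: "subprob_space M \<Longrightarrow> sigma_finite_measure M"
  by (simp add: subprob_space_def finite_measure_def)

lemma lap_coord:
  assumes l: "l > 0" and t: "0 \<le> t" "t < l"
  shows "(\<integral>\<^sup>+x. ennreal (exp (t * \<bar>x\<bar> - u)) \<partial>LAP l) \<le> ennreal (exp (- u) * (l / (l - t)))"
proof -
  have "(\<integral>\<^sup>+x. ennreal (exp (t * \<bar>x\<bar> - u)) \<partial>LAP l)
     = (\<integral>\<^sup>+x. ennreal (exp (- u)) * (ennreal (laplace_density l x) * ennreal (exp (t * \<bar>x\<bar>))) \<partial>lborel)"
    by (subst nn_integral_density) (auto simp: exp_diff ennreal_mult'[symmetric] exp_minus field_simps intro!: nn_integral_cong)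
  also have "\<dots> = ennreal (exp (- u)) * (\<integral>\<^sup>+x. ennreal (laplace_density l x) * ennreal (exp (t * \<bar>x\<bar>)) \<partial>lborel)"
    by (rule nn_integral_cmult) (simp add: laplace_density_def)
  also have "\<dots> \<le> ennreal (exp (- u)) * ennreal (l / (l - t))"
    by (intro mult_left_mono lap_mgf l t) simp
  also have "\<dots> = ennreal (exp (- u) * (l / (l - t)))"
    using l t by (subst ennreal_mult) auto
  finally show ?thesis .
qed



definition MU :: "nat \<Rightarrow> nat \<Rightarrow> real \<Rightarrow> real \<Rightarrow> (nat \<Rightarrow> bool) \<Rightarrow> (nat \<times> nat \<Rightarrow> real) measure" where
  "MU p K l0 l1 \<xi> = PiM ({..<p} \<times> {..<K}) (\<lambda>(j, k). LAP (if \<xi> j then l1 else l0))"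

lemma MU_psf: "product_sigma_finite (\<lambda>(j, k). LAP (if \<xi> j then l1 else l0))"
  unfolding product_sigma_finite_def
  by (auto intro: subprob_sigma_finite lap_subprob)

lemma rows_bound:
  fixes \<xi> :: "nat \<Rightarrow> bool" and S :: "nat set"
  assumes S: "S \<subseteq> {..<p}" and t: "t \<ge> 0" and K: "K > 0"
    and hc: "(\<integral>\<^sup>+x. ennreal (exp (t * \<bar>x\<bar> - t * \<delta> / real K)) \<partial>LAP l0) \<le> c"
  shows "(\<integral>\<^sup>+\<mu>. (\<Prod>j\<in>S. indicator {\<delta><..} (\<Sum>k<K. \<bar>\<mu> (j, k)\<bar>)) \<partial>MU p K l0 l1 \<xi>)
         \<le> (\<Prod>j\<in>S. if \<xi> j then 1 else c ^ K)"
proof -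
  define M where "M = (\<lambda>(j::nat, k::nat). LAP (if \<xi> j then l1 else l0))"
  interpret psf: product_sigma_finite M unfolding M_def by (rule MU_psf)
  define g where "g = (\<lambda>(j::nat, k::nat) (x::real). if j \<in> S \<and> \<not> \<xi> j then ennreal (exp (t * \<bar>x\<bar> - t * \<delta> / real K)) else 1)"
  have gm: "g i \<in> borel_measurable (M i)" for i
    unfolding g_def M_def by (cases i) simp
  have fin: "finite ({..<p} \<times> {..<K})" by simp
  have pt: "(\<Prod>j\<in>S. indicator {\<delta><..} (\<Sum>k<K. \<bar>\<mu> (j, k)\<bar>)) \<le> (\<Prod>i\<in>{..<p} \<times> {..<K}. g i (\<mu> i))"
    for \<mu> :: "nat \<times> nat \<Rightarrow> real"
  proof -
    have "(\<Prod>j\<in>S. indicator {\<delta><..} (\<Sum>k<K. \<bar>\<mu> (j, k)\<bar>) :: ennreal)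
        = (\<Prod>j\<in>{..<p}. if j \<in> S then indicator {\<delta><..} (\<Sum>k<K. \<bar>\<mu> (j, k)\<bar>) else 1)"
      using prod.inter_restrict[of "{..<p}" "\<lambda>j. indicator {\<delta><..} (\<Sum>k<K. \<bar>\<mu> (j, k)\<bar>) :: ennreal" S] S
      by (simp add: Int_absorb1)
    also have "\<dots> \<le> (\<Prod>j\<in>{..<p}. \<Prod>k\<in>{..<K}. g (j, k) (\<mu> (j, k)))"
    proof (rule prod_mono_ennreal)
      fix j assume "j \<in> {..<p}"
      show "(if j \<in> S then indicator {\<delta><..} (\<Sum>k<K. \<bar>\<mu> (j, k)\<bar>) else 1)
            \<le> (\<Prod>k\<in>{..<K}. g (j, k) (\<mu> (j, k)))"
      proof (cases "j \<in> S \<and> \<not> \<xi> j")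
        case True
        have "(\<Prod>k\<in>{..<K}. g (j, k) (\<mu> (j, k))) = (\<Prod>k\<in>{..<K}. ennreal (exp (t * \<bar>\<mu> (j, k)\<bar> - t * \<delta> / real K)))"
          using True unfolding g_def by simp
        also have "\<dots> = ennreal (\<Prod>k\<in>{..<K}. exp (t * \<bar>\<mu> (j, k)\<bar> - t * \<delta> / real K))"
          by (simp add: prod_ennreal)
        also have "(\<Prod>k\<in>{..<K}. exp (t * \<bar>\<mu> (j, k)\<bar> - t * \<delta> / real K)) = exp (t * ((\<Sum>k<K. \<bar>\<mu> (j, k)\<bar>) - \<delta>))"
          using K by (simp add: exp_sum[symmetric] sum_subtractf sum_distrib_left algebra_simps)
        finally have eq: "(\<Prod>k\<in>{..<K}. g (j, k) (\<mu> (j, k))) = ennreal (exp (t * ((\<Sum>k<K. \<bar>\<mu> (j, k)\<bar>) - \<delta>)))" .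
        show ?thesis
        proof (cases "(\<Sum>k<K. \<bar>\<mu> (j, k)\<bar>) > \<delta>")
          case True
          then have "1 \<le> exp (t * ((\<Sum>k<K. \<bar>\<mu> (j, k)\<bar>) - \<delta>))" using t by simp
          then show ?thesis using True \<open>j \<in> S \<and> \<not> \<xi> j\<close> eq by (simp add: indicator_def)
        qed (use \<open>j \<in> S \<and> \<not> \<xi> j\<close> in \<open>simp add: indicator_def\<close>)
      next
        case False
        then have "(\<Prod>k\<in>{..<K}. g (j, k) (\<mu> (j, k))) = 1" unfolding g_def by (intro prod.neutral) auto
        then show ?thesis by (simp add: indicator_def)
      qed
    qed
    also have "\<dots> = (\<Prod>i\<in>{..<p} \<times> {..<K}. g i (\<mu> i))"
      by (subst prod.cartesian_product) (simp add: case_prod_beta)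
    finally show ?thesis .
  qed
  have "(\<integral>\<^sup>+\<mu>. (\<Prod>j\<in>S. indicator {\<delta><..} (\<Sum>k<K. \<bar>\<mu> (j, k)\<bar>)) \<partial>MU p K l0 l1 \<xi>)
      \<le> (\<integral>\<^sup>+\<mu>. (\<Prod>i\<in>{..<p} \<times> {..<K}. g i (\<mu> i)) \<partial>PiM ({..<p} \<times> {..<K}) M)"
    unfolding MU_def M_def[symmetric] by (intro nn_integral_mono pt)
  also have "\<dots> = (\<Prod>i\<in>{..<p} \<times> {..<K}. integral\<^sup>N (M i) (g i))"
    by (rule psf.product_nn_integral_prod[OF fin gm])
  also have "\<dots> \<le> (\<Prod>i\<in>{..<p} \<times> {..<K}. (case i of (j, k) \<Rightarrow> if j \<in> S \<and> \<not> \<xi> j then c else 1))"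
  proof (rule prod_mono_ennreal)
    fix i assume "i \<in> {..<p} \<times> {..<K}"
    obtain j k where i: "i = (j, k)" by (cases i)
    show "integral\<^sup>N (M i) (g i) \<le> (case i of (j, k) \<Rightarrow> if j \<in> S \<and> \<not> \<xi> j then c else 1)"
    proof (cases "j \<in> S \<and> \<not> \<xi> j")
      case True
      then show ?thesis using hc unfolding i M_def g_def by simp
    next
      case False
      have "integral\<^sup>N (M i) (g i) = emeasure (M i) (space (M i))"
      proof -
        have "g i = (\<lambda>x. 1)" using False unfolding i g_def by (auto simp: fun_eq_iff)
        then show ?thesis by simp
      qed
      also have "\<dots> \<le> 1" unfolding M_def i using subprob_space.emeasure_space_le_1[OF lap_subprob] by simp
      finally show ?thesis using False i by auto
    qed
  qed
  also have "\<dots> = (\<Prod>j\<in>{..<p}. \<Prod>k\<in>{..<K}. if j \<in> S \<and> \<not> \<xi> j then c else 1)"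
    by (subst prod.cartesian_product) (simp add: case_prod_beta)
  also have "\<dots> = (\<Prod>j\<in>{..<p}. if j \<in> S then (if \<xi> j then 1 else c ^ K) else 1)"
    by (intro prod.cong) auto
  also have "\<dots> = (\<Prod>j\<in>S. if \<xi> j then 1 else c ^ K)"
    using prod.inter_restrict[of "{..<p}" "\<lambda>j. if \<xi> j then 1 else c ^ K" S] S
    by (simp add: Int_absorb1)
  finally show ?thesis .
qed



definition XI :: "nat \<Rightarrow> real \<Rightarrow> (nat \<Rightarrow> bool) measure" where
  "XI p \<theta> = PiM {..<p} (\<lambda>_. measure_pmf (bernoulli_pmf \<theta>))"

lemma bern_int_le:
  assumes b: "b \<ge> 0"
  shows "(\<integral>\<^sup>+x. (if x then 1 else ennreal b) \<partial>measure_pmf (bernoulli_pmf \<theta>))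
     \<le> ennreal (pmf (bernoulli_pmf \<theta>) True + b)"
proof -
  have "(\<integral>\<^sup>+x. (if x then 1 else ennreal b) \<partial>measure_pmf (bernoulli_pmf \<theta>))
     = (\<integral>\<^sup>+x. ennreal (pmf (bernoulli_pmf \<theta>) x) * (if x then 1 else ennreal b) \<partial>count_space UNIV)"
    by (rule nn_integral_measure_pmf)
  also have "\<dots> = ennreal (pmf (bernoulli_pmf \<theta>) True) + ennreal (pmf (bernoulli_pmf \<theta>) False) * ennreal b"
    by (subst nn_integral_count_space_finite) (auto simp: UNIV_bool)
  also have "\<dots> \<le> ennreal (pmf (bernoulli_pmf \<theta>) True) + 1 * ennreal b"
    by (intro add_left_mono mult_right_mono) (auto simp: pmf_le_1)
  also have "\<dots> = ennreal (pmf (bernoulli_pmf \<theta>) True + b)"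
    using b by (simp add: ennreal_plus)
  finally show ?thesis .
qed

lemma xi_bound:
  assumes S: "S \<subseteq> {..<p}" and b: "b \<ge> 0"
  shows "(\<integral>\<^sup>+\<xi>. (\<Prod>j\<in>S. if \<xi> j then 1 else ennreal b) \<partial>XI p \<theta>)
     \<le> ennreal ((pmf (bernoulli_pmf \<theta>) True + b) ^ card S)"
proof -
  interpret psf: product_sigma_finite "\<lambda>_::nat. measure_pmf (bernoulli_pmf \<theta>)"
    unfolding product_sigma_finite_def by (auto intro: sigma_finite_measure_count_space_countable prob_space_imp_sigma_finite prob_space_measure_pmf)
  define f where "f = (\<lambda>j (x::bool). if j \<in> S then (if x then 1 else ennreal b) else 1)"
  have "(\<integral>\<^sup>+\<xi>. (\<Prod>j\<in>S. if \<xi> j then 1 else ennreal b) \<partial>XI p \<theta>)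
      = (\<integral>\<^sup>+\<xi>. (\<Prod>j\<in>{..<p}. f j (\<xi> j)) \<partial>XI p \<theta>)"
  proof (intro nn_integral_cong)
    fix \<xi> :: "nat \<Rightarrow> bool"
    show "(\<Prod>j\<in>S. if \<xi> j then 1 else ennreal b) = (\<Prod>j\<in>{..<p}. f j (\<xi> j))"
      using prod.inter_restrict[of "{..<p}" "\<lambda>j. if \<xi> j then 1 else ennreal b" S] S
      unfolding f_def by (simp add: Int_absorb1)
  qed
  also have "\<dots> = (\<Prod>j\<in>{..<p}. \<integral>\<^sup>+x. f j x \<partial>measure_pmf (bernoulli_pmf \<theta>))"
    unfolding XI_def by (rule psf.product_nn_integral_prod) auto
  also have "\<dots> \<le> (\<Prod>j\<in>{..<p}. if j \<in> S then ennreal (pmf (bernoulli_pmf \<theta>) True + b) else 1)"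
  proof (rule prod_mono_ennreal)
    fix j assume "j \<in> {..<p}"
    show "(\<integral>\<^sup>+x. f j x \<partial>measure_pmf (bernoulli_pmf \<theta>)) \<le> (if j \<in> S then ennreal (pmf (bernoulli_pmf \<theta>) True + b) else 1)"
      unfolding f_def using bern_int_le[OF b, of \<theta>] by (auto simp: measure_pmf.emeasure_space_1)
  qed
  also have "\<dots> = (\<Prod>j\<in>S. ennreal (pmf (bernoulli_pmf \<theta>) True + b))"
    using prod.inter_restrict[of "{..<p}" "\<lambda>j. ennreal (pmf (bernoulli_pmf \<theta>) True + b)" S] S
    by (simp add: Int_absorb1)
  also have "\<dots> = ennreal ((pmf (bernoulli_pmf \<theta>) True + b) ^ card S)"
    using b by (simp add: ennreal_power[symmetric] del: ennreal_plus)
  finally show ?thesis .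
qed



lemma gamma_growth:
  fixes x :: real assumes x: "x > 0"
  shows "Gamma (x + 1 + real m) \<ge> x ^ m * Gamma (x + 1)"
proof (induction m)
  case 0 then show ?case by simp
next
  case (Suc m)
  have pos: "x + 1 + real m > 0" using x by simp
  have "Gamma (x + 1 + real (Suc m)) = Gamma ((x + 1 + real m) + 1)" by (simp add: add.assoc)
  also have "\<dots> = (x + 1 + real m) * Gamma (x + 1 + real m)"
    using pos by (subst Gamma_plus1) (auto simp: nonpos_Ints_def)
  also have "\<dots> \<ge> x * (x ^ m * Gamma (x + 1))"
    using Suc pos x Gamma_real_pos[of "x+1"] by (intro mult_mono) auto
  finally show ?case by (simp add: mult.assoc)
qed

lemma beta_ratio:
  fixes B :: real assumes B: "B > 0"
  shows "Beta (real m + 1) B / Beta 1 B \<le> fact m / B ^ m"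
proof -
  have g1: "Gamma (real m + 1) = fact m" using Gamma_fact[of m] by (simp add: add.commute)
  have gB: "Gamma B > 0" "Gamma (B + 1) > 0" "Gamma (B + 1 + real m) > 0"
    using B by (auto intro!: Gamma_real_pos)
  have gB1: "Gamma (1 + B) = B * Gamma B"
    using B Gamma_plus1[of B] by (auto simp: nonpos_Ints_def add.commute)
  have "Beta (real m + 1) B / Beta 1 B = fact m * Gamma (B + 1) / Gamma (B + 1 + real m)"
    using gB gB1 B unfolding Beta_def g1 by (simp add: field_simps add_ac)
  also have "\<dots> \<le> fact m * Gamma (B + 1) / (B ^ m * Gamma (B + 1))"
    using gamma_growth[OF B, of m] gB B
    by (intro divide_left_mono mult_nonneg_nonneg mult_pos_pos) auto
  also have "\<dots> = fact m / B ^ m" using gB by simp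
  finally show ?thesis .
qed

lemma beta_dens_meas[measurable]: "beta_density a b \<in> borel_measurable borel"
  unfolding beta_density_def by measurable

lemma beta_moment:
  assumes B: "B > 0"
  shows "(\<integral>\<^sup>+\<theta>. ennreal (beta_density 1 B \<theta>) * ennreal (\<theta> ^ m) \<partial>lborel) \<le> ennreal (fact m / B ^ m)"
proof -
  define h where "h = (\<lambda>t::real. t powr (real m + 1 - 1) * (1 - t) powr (B - 1))"
  have Bpos: "Beta 1 B > 0" using B by (simp add: Beta_def Gamma_real_pos)
  have pt: "ennreal (beta_density 1 B t) * ennreal (t ^ m) \<le> ennreal (1 / Beta 1 B) * ennreal (indicator {0..1} t * h t)" for t
  proof (cases "0 < t \<and> t < 1")
    case True
    have "ennreal (beta_density 1 B t) * ennreal (t ^ m) = ennreal (beta_density 1 B t * t ^ m)"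
      using True Bpos by (subst ennreal_mult) (auto simp: beta_density_def)
    also have "beta_density 1 B t * t ^ m = 1 / Beta 1 B * (indicator {0..1} t * h t)"
      using True unfolding beta_density_def h_def by (simp add: powr_realpow)
    also have "ennreal (1 / Beta 1 B * (indicator {0..1} t * h t)) = ennreal (1 / Beta 1 B) * ennreal (indicator {0..1} t * h t)"
      using Bpos by (intro ennreal_mult) (auto simp: h_def)
    finally show ?thesis by simp
  next
    case False
    then have "beta_density 1 B t = 0" by (auto simp: beta_density_def)
    then show ?thesis by simp
  qed
  have hint: "(h has_integral Beta (real m + 1) B) {0..1}"
    unfolding h_def by (rule has_integral_Beta_real) (use B in auto)
  have "(\<integral>\<^sup>+t. ennreal (indicator {0..1} t * h t) \<partial>lborel) = ennreal (Beta (real m + 1) B)"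
    using nn_integral_has_integral_lebesgue[OF _ hint] unfolding h_def by (simp add: mult.commute)
  have "(\<integral>\<^sup>+\<theta>. ennreal (beta_density 1 B \<theta>) * ennreal (\<theta> ^ m) \<partial>lborel)
      \<le> (\<integral>\<^sup>+t. ennreal (1 / Beta 1 B) * ennreal (indicator {0..1} t * h t) \<partial>lborel)"
    by (intro nn_integral_mono pt)
  also have "\<dots> = ennreal (1 / Beta 1 B) * (\<integral>\<^sup>+t. ennreal (indicator {0..1} t * h t) \<partial>lborel)"
    by (rule nn_integral_cmult) (simp add: h_def)
  also have "\<dots> = ennreal (1 / Beta 1 B) * ennreal (Beta (real m + 1) B)"
    using \<open>(\<integral>\<^sup>+t. ennreal (indicator {0..1} t * h t) \<partial>lborel) = _\<close> by simp
  also have "\<dots> = ennreal (Beta (real m + 1) B / Beta 1 B)"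
    using Bpos B by (subst ennreal_mult[symmetric]) (auto simp: Beta_def Gamma_real_pos intro!: divide_nonneg_pos mult_nonneg_nonneg less_imp_le)
  also have "\<dots> \<le> ennreal (fact m / B ^ m)"
    by (intro ennreal_leI beta_ratio B)
  finally show ?thesis .
qed



abbreviation NN :: "nat \<Rightarrow> nat \<Rightarrow> (nat \<times> nat \<Rightarrow> real) measure" where
  "NN p K \<equiv> PiM ({..<p} \<times> {..<K}) (\<lambda>_. borel)"

abbreviation XIS :: "nat \<Rightarrow> (nat \<Rightarrow> bool) measure" where
  "XIS p \<equiv> PiM {..<p} (\<lambda>_. count_space UNIV)"

lemma meas_discrete: "sets M = Pow (space M) \<Longrightarrow> f \<in> space M \<rightarrow> space N \<Longrightarrow> f \<in> measurable M N"
  by (auto simp: measurable_def)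

lemma sets_MU: "sets (MU p K l0 l1 \<xi>) = sets (NN p K)"
  unfolding MU_def by (intro sets_PiM_cong) auto

lemma MU_subprob: "subprob_space (MU p K l0 l1 \<xi>)"
proof (rule subprob_spaceI)
  define M where "M = (\<lambda>(j::nat, k::nat). LAP (if \<xi> j then l1 else l0))"
  interpret psf: product_sigma_finite M unfolding M_def by (rule MU_psf)
  have le1: "emeasure (LAP l) UNIV \<le> 1" for l
    using subprob_space.emeasure_space_le_1[OF lap_subprob[of l]] by simp
  have "emeasure (MU p K l0 l1 \<xi>) (space (MU p K l0 l1 \<xi>)) = emeasure (PiM ({..<p} \<times> {..<K}) M) (PiE ({..<p} \<times> {..<K}) (\<lambda>i. space (M i)))"
    unfolding MU_def M_def[symmetric] by (simp add: space_PiM)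
  also have "\<dots> = (\<Prod>i\<in>{..<p} \<times> {..<K}. emeasure (M i) (space (M i)))"
    by (rule psf.emeasure_PiM) auto
  also have "\<dots> \<le> (\<Prod>i\<in>{..<p} \<times> {..<K}. 1)"
    using le1 by (intro prod_mono_ennreal) (auto simp: M_def split: prod.splits intro: subprob_space.emeasure_space_le_1[OF lap_subprob])
  finally show "emeasure (MU p K l0 l1 \<xi>) (space (MU p K l0 l1 \<xi>)) \<le> 1" by simp
  show "space (MU p K l0 l1 \<xi>) \<noteq> {}" unfolding MU_def
    by (simp add: space_PiM PiE_eq_empty_iff split: prod.splits)
qed

lemma sets_XIS: "sets (XIS p) = Pow (space (XIS p))"
proof
  show "sets (XIS p) \<subseteq> Pow (space (XIS p))" using sets.sets_into_space by auto
  show "Pow (space (XIS p)) \<subseteq> sets (XIS p)"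
  proof
    fix A assume A: "A \<in> Pow (space (XIS p))"
    have fin: "finite (space (XIS p))" by (simp add: space_PiM finite_PiE)
    have sing: "{x} \<in> sets (XIS p)" if "x \<in> space (XIS p)" for x
    proof -
      have "{x} = PiE {..<p} (\<lambda>i. {x i})" using that by (auto simp: space_PiM PiE_iff extensional_def)
      also have "\<dots> \<in> sets (XIS p)" by (intro sets_PiM_I_countable) auto
      finally show ?thesis .
    qed
    have "A = (\<Union>x\<in>A. {x})" by auto
    also have "\<dots> \<in> sets (XIS p)"
      using A fin sing by (intro sets.finite_UN) (auto intro: finite_subset)
    finally show "A \<in> sets (XIS p)" .
  qed
qed

lemma sets_XI: "sets (XI p \<theta>) = sets (XIS p)"
  unfolding XI_def by (intro sets_PiM_cong) auto

lemma MU_meas: "MU p K l0 l1 \<in> measurable (XIS p) (subprob_algebra (NN p K))"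
  by (rule meas_discrete[OF sets_XIS]) (auto simp: space_subprob_algebra MU_subprob sets_MU)

interpretation pmf_as_function .

lemma pmf_bern_True: "pmf (bernoulli_pmf \<theta>) True = min 1 (max 0 \<theta>)"
  by transfer simp

lemma pmf_bern_False: "pmf (bernoulli_pmf \<theta>) False = 1 - min 1 (max 0 \<theta>)"
  by transfer simp

lemma pmf_bern_meas[measurable]: "(\<lambda>\<theta>. pmf (bernoulli_pmf \<theta>) b) \<in> borel_measurable borel"
  by (cases b) (simp_all add: pmf_bern_True pmf_bern_False)

lemma XI_meas: "XI p \<in> measurable (borel :: real measure) (subprob_algebra (XIS p))"
proof (rule measurable_subprob_algebra)
  fix \<theta> :: real
  show "subprob_space (XI p \<theta>)" unfolding XI_def
    by (intro prob_space_imp_subprob_space prob_space_PiM prob_space_measure_pmf)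
  show "sets (XI p \<theta>) = sets (XIS p)" by (rule sets_XI)
next
  fix A assume A: "A \<in> sets (XIS p)"
  have fin: "finite A" using sets.sets_into_space[OF A]
    by (rule finite_subset) (simp add: space_PiM finite_PiE)
  interpret psf: product_sigma_finite "\<lambda>_::nat. measure_pmf (bernoulli_pmf \<theta>)" for \<theta>
    unfolding product_sigma_finite_def by (auto intro: prob_space_imp_sigma_finite prob_space_measure_pmf)
  have eq: "emeasure (XI p \<theta>) A = (\<Sum>x\<in>A. \<Prod>i\<in>{..<p}. ennreal (pmf (bernoulli_pmf \<theta>) (x i)))" for \<theta>
  proof -
    have sing: "x \<in> A \<Longrightarrow> {x} = PiE {..<p} (\<lambda>i. {x i})" for x
      using sets.sets_into_space[OF A] by (auto simp: space_PiM PiE_iff extensional_def)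
    have "emeasure (XI p \<theta>) A = (\<Sum>x\<in>A. emeasure (XI p \<theta>) {x})"
      using fin sing by (intro emeasure_eq_sum_singleton) (auto simp: XI_def intro!: sets_PiM_I_countable)
    also have "\<dots> = (\<Sum>x\<in>A. \<Prod>i\<in>{..<p}. ennreal (pmf (bernoulli_pmf \<theta>) (x i)))"
    proof (rule sum.cong)
      fix x assume "x \<in> A"
      then show "emeasure (XI p \<theta>) {x} = (\<Prod>i\<in>{..<p}. ennreal (pmf (bernoulli_pmf \<theta>) (x i)))"
        unfolding sing[OF \<open>x \<in> A\<close>] XI_def
        by (subst psf.emeasure_PiM) (auto simp: emeasure_pmf_single)
    qed simp
    finally show ?thesis .
  qed
  show "(\<lambda>\<theta>. emeasure (XI p \<theta>) A) \<in> borel_measurable borel"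
    unfolding eq by measurable
qed



lemma comp_meas[measurable]: "(\<lambda>\<mu>. \<mu> i) \<in> borel_measurable (PiM I (\<lambda>_. borel :: real measure))"
proof (cases "i \<in> I")
  case True then show ?thesis by measurable
next
  case False
  have "(\<lambda>\<mu>. \<mu> i) \<in> borel_measurable (PiM I (\<lambda>_. borel :: real measure)) \<longleftrightarrow> (\<lambda>\<mu>. undefined :: real) \<in> borel_measurable (PiM I (\<lambda>_. borel :: real measure))"
    using False by (intro measurable_cong) (auto simp: space_PiM PiE_def extensional_def)
  then show ?thesis by simp
qed

lemma pow_sum_le: fixes a b :: real assumes "a \<ge> 0" "b \<ge> 0"
  shows "(a + b) ^ m \<le> 2 ^ m * (a ^ m + b ^ m)"
proof -
  have "(a + b) ^ m \<le> (2 * max a b) ^ m" using assms by (intro power_mono) auto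
  also have "\<dots> = 2 ^ m * max a b ^ m" by (simp add: power_mult_distrib)
  also have "max a b ^ m \<le> a ^ m + b ^ m" using assms by (auto simp: max_def)
  finally show ?thesis by simp
qed

lemma sets_XI_Pow: "sets (XI p \<theta>) = Pow (space (XI p \<theta>))"
  using sets_XI[of p \<theta>] sets_XIS[of p] sets_eq_imp_space_eq[OF sets_XI[of p \<theta>]] by simp

lemma prior_bound:
  fixes p K :: nat and \<kappa> l0 l1 \<delta> x t c :: real
  assumes K: "K > 0" and t: "t \<ge> 0" and c: "c \<ge> 0"
    and hc: "(\<integral>\<^sup>+y. ennreal (exp (t * \<bar>y\<bar> - t * \<delta> / real K)) \<partial>LAP l0) \<le> ennreal c"
    and Bpos: "beta_theta p \<kappa> > 0"
  shows "emeasure (ssl_prior p K \<kappa> l0 l1) {\<mu> \<in> space (ssl_prior p K \<kappa> l0 l1). real (card (supp_soft p K \<delta> \<mu>)) \<ge> x}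
      \<le> ennreal (real (p choose nat \<lceil>x\<rceil>) * (2 ^ nat \<lceil>x\<rceil> * (fact (nat \<lceil>x\<rceil>) / (beta_theta p \<kappa>) ^ nat \<lceil>x\<rceil> + (c ^ K) ^ nat \<lceil>x\<rceil>)))"
proof -
  define m where "m = nat \<lceil>x\<rceil>"
  define b where "b = c ^ K"
  define B where "B = beta_theta p \<kappa>"
  have b: "b \<ge> 0" unfolding b_def using c by simp
  have B: "B > 0" unfolding B_def using Bpos .
  define BETA where "BETA = density lborel (\<lambda>t. ennreal (beta_density 1 B t))"
  define P where "P = ssl_prior p K \<kappa> l0 l1"
  have P_eq: "P = BETA \<bind> (\<lambda>\<theta>. XI p \<theta> \<bind> MU p K l0 l1)"
    unfolding P_def ssl_prior_def BETA_def B_def XI_def MU_def by simp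
  define E where "E = {\<mu> \<in> space P. real (card (supp_soft p K \<delta> \<mu>)) \<ge> x}"
  define Sm where "Sm = {S. S \<subseteq> {..<p} \<and> card S = m}"
  have finSm: "finite Sm" unfolding Sm_def by (rule finite_subset[of _ "Pow {..<p}"]) auto
  define F where "F = (\<lambda>\<mu>::nat\<times>nat\<Rightarrow>real. \<Sum>S\<in>Sm. \<Prod>j\<in>S. indicator {\<delta><..} (\<Sum>k<K. \<bar>\<mu> (j, k)\<bar>) :: ennreal)"
  have Fm: "F \<in> borel_measurable (NN p K)" unfolding F_def by measurable
  have XI_meas': "XI p \<in> measurable BETA (subprob_algebra (XIS p))"
  proof -
    have "sets BETA = sets borel" by (simp add: BETA_def)
    then show ?thesis using XI_meas measurable_cong_sets[OF _ refl] by metis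
  qed
  have ker: "(\<lambda>\<theta>. XI p \<theta> \<bind> MU p K l0 l1) \<in> measurable BETA (subprob_algebra (NN p K))"
    by (rule measurable_bind2[OF XI_meas' MU_meas])
  have MU_meas': "MU p K l0 l1 \<in> measurable (XI p \<theta>) (subprob_algebra (NN p K))" for \<theta>
    using MU_meas measurable_cong_sets[OF sets_XI refl] by metis
  have spXI: "space (XI p \<theta>) \<noteq> {}" for \<theta>
    unfolding XI_def by (simp add: space_PiM PiE_eq_empty_iff)
  have sets_inner: "sets (XI p \<theta> \<bind> MU p K l0 l1) = sets (NN p K)" for \<theta>
    using spXI by (intro sets_bind) (auto simp: sets_MU)
  have sets_P: "sets P = sets (NN p K)"
    unfolding P_eq by (rule sets_bind) (rule sets_inner, simp add: BETA_def)
  have space_P: "space P = space (NN p K)" using sets_P by (rule sets_eq_imp_space_eq)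
  have step1: "emeasure P E \<le> (\<integral>\<^sup>+\<mu>. F \<mu> \<partial>P)"
  proof (cases "E \<in> sets P")
    case True
    have "emeasure P E = (\<integral>\<^sup>+\<mu>. indicator E \<mu> \<partial>P)" using True by simp
    also have "\<dots> \<le> (\<integral>\<^sup>+\<mu>. F \<mu> \<partial>P)"
    proof (intro nn_integral_mono)
      fix \<mu> assume "\<mu> \<in> space P"
      show "indicator E \<mu> \<le> F \<mu>"
      proof (cases "\<mu> \<in> E")
        case True
        then have "x \<le> real (card (supp_soft p K \<delta> \<mu>))" unfolding E_def by simp
        then have "m \<le> card (supp_soft p K \<delta> \<mu>)" unfolding m_def by linarith
        then obtain S where S: "S \<subseteq> supp_soft p K \<delta> \<mu>" "card S = m" "finite S"
          by (rule obtain_subset_with_card_n)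
        have SSm: "S \<in> Sm" using S unfolding Sm_def supp_soft_def by auto
        have one: "(\<Prod>j\<in>S. indicator {\<delta><..} (\<Sum>k<K. \<bar>\<mu> (j, k)\<bar>) :: ennreal) = 1"
          using S(1) unfolding supp_soft_def by (intro prod.neutral) (auto simp: indicator_def)
        have "(\<Prod>j\<in>S. indicator {\<delta><..} (\<Sum>k<K. \<bar>\<mu> (j, k)\<bar>) :: ennreal) \<le> F \<mu>"
          unfolding F_def using SSm finSm by (intro member_le_sum) auto
        then show ?thesis using one True by simp
      qed simp
    qed
    finally show ?thesis .
  next
    case False
    then show ?thesis by (simp add: emeasure_notin_sets)
  qed
  have step2: "(\<integral>\<^sup>+\<mu>. F \<mu> \<partial>P) = (\<integral>\<^sup>+\<theta>. (\<integral>\<^sup>+\<mu>. F \<mu> \<partial>(XI p \<theta> \<bind> MU p K l0 l1)) \<partial>BETA)"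
    unfolding P_eq by (rule nn_integral_bind[OF Fm ker])
  have step3: "(\<integral>\<^sup>+\<mu>. F \<mu> \<partial>(XI p \<theta> \<bind> MU p K l0 l1)) \<le> (\<Sum>S\<in>Sm. ennreal ((pmf (bernoulli_pmf \<theta>) True + b) ^ m))" for \<theta>
  proof -
    have "(\<integral>\<^sup>+\<mu>. F \<mu> \<partial>(XI p \<theta> \<bind> MU p K l0 l1)) = (\<integral>\<^sup>+\<xi>. (\<integral>\<^sup>+\<mu>. F \<mu> \<partial>MU p K l0 l1 \<xi>) \<partial>XI p \<theta>)"
      by (rule nn_integral_bind[OF Fm MU_meas'])
    also have "\<dots> \<le> (\<integral>\<^sup>+\<xi>. (\<Sum>S\<in>Sm. \<Prod>j\<in>S. if \<xi> j then 1 else ennreal b) \<partial>XI p \<theta>)"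
    proof (intro nn_integral_mono)
      fix \<xi> :: "nat \<Rightarrow> bool"
      have Fm': "(\<lambda>\<mu>. \<Prod>j\<in>S. indicator {\<delta><..} (\<Sum>k<K. \<bar>\<mu> (j, k)\<bar>) :: ennreal) \<in> borel_measurable (MU p K l0 l1 \<xi>)" for S
        by (subst measurable_cong_sets[OF sets_MU refl]) measurable
      have "(\<integral>\<^sup>+\<mu>. F \<mu> \<partial>MU p K l0 l1 \<xi>) = (\<Sum>S\<in>Sm. \<integral>\<^sup>+\<mu>. (\<Prod>j\<in>S. indicator {\<delta><..} (\<Sum>k<K. \<bar>\<mu> (j, k)\<bar>)) \<partial>MU p K l0 l1 \<xi>)"
        unfolding F_def by (rule nn_integral_sum) (rule Fm')
      also have "\<dots> \<le> (\<Sum>S\<in>Sm. \<Prod>j\<in>S. if \<xi> j then 1 else ennreal c ^ K)"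
        by (intro sum_mono rows_bound[OF _ t K hc]) (auto simp: Sm_def)
      also have "\<dots> = (\<Sum>S\<in>Sm. \<Prod>j\<in>S. if \<xi> j then 1 else ennreal b)"
        unfolding b_def using c by (intro sum.cong prod.cong refl) (simp add: ennreal_power)
      finally show "(\<integral>\<^sup>+\<mu>. F \<mu> \<partial>MU p K l0 l1 \<xi>) \<le> (\<Sum>S\<in>Sm. \<Prod>j\<in>S. if \<xi> j then 1 else ennreal b)" .
    qed
    also have "\<dots> = (\<Sum>S\<in>Sm. \<integral>\<^sup>+\<xi>. (\<Prod>j\<in>S. if \<xi> j then 1 else ennreal b) \<partial>XI p \<theta>)"
      by (rule nn_integral_sum) (rule meas_discrete[OF sets_XI_Pow], simp)
    also have "\<dots> \<le> (\<Sum>S\<in>Sm. ennreal ((pmf (bernoulli_pmf \<theta>) True + b) ^ m))"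
    proof (rule sum_mono)
      fix S assume "S \<in> Sm"
      then have "S \<subseteq> {..<p}" "card S = m" unfolding Sm_def by auto
      then show "(\<integral>\<^sup>+\<xi>. (\<Prod>j\<in>S. if \<xi> j then 1 else ennreal b) \<partial>XI p \<theta>) \<le> ennreal ((pmf (bernoulli_pmf \<theta>) True + b) ^ m)"
        using xi_bound[OF _ b, of S p \<theta>] by simp
    qed
    finally show ?thesis .
  qed
  define q where "q = (\<lambda>\<theta>. pmf (bernoulli_pmf \<theta>) True)"
  have bdm: "(\<lambda>\<theta>. ennreal (beta_density 1 B \<theta>)) \<in> borel_measurable borel" by measurable
  have qm: "(\<lambda>\<theta>. ennreal ((q \<theta> + b) ^ m)) \<in> borel_measurable borel" unfolding q_def by measurable
  have bd_nn: "beta_density 1 B \<theta> \<ge> 0" for \<theta>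
    using B by (auto simp: beta_density_def Beta_def Gamma_real_pos intro!: divide_nonneg_pos mult_nonneg_nonneg)
  have inner: "(\<integral>\<^sup>+\<theta>. ennreal ((q \<theta> + b) ^ m) \<partial>BETA) \<le> ennreal (2 ^ m) * (ennreal (fact m / B ^ m) + ennreal (b ^ m))"
  proof -
    have "(\<integral>\<^sup>+\<theta>. ennreal ((q \<theta> + b) ^ m) \<partial>BETA) = (\<integral>\<^sup>+\<theta>. ennreal (beta_density 1 B \<theta>) * ennreal ((q \<theta> + b) ^ m) \<partial>lborel)"
      unfolding BETA_def by (rule nn_integral_density[OF bdm[folded measurable_lborel2] qm[folded measurable_lborel2]])
    also have "\<dots> \<le> (\<integral>\<^sup>+\<theta>. ennreal (2 ^ m) * (ennreal (beta_density 1 B \<theta>) * ennreal (\<theta> ^ m) + ennreal (b ^ m) * ennreal (beta_density 1 B \<theta>)) \<partial>lborel)"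
    proof (rule nn_integral_mono)
      fix \<theta> :: real
      show "ennreal (beta_density 1 B \<theta>) * ennreal ((q \<theta> + b) ^ m) \<le> ennreal (2 ^ m) * (ennreal (beta_density 1 B \<theta>) * ennreal (\<theta> ^ m) + ennreal (b ^ m) * ennreal (beta_density 1 B \<theta>))"
      proof (cases "0 < \<theta> \<and> \<theta> < 1")
        case True
        then have qt: "q \<theta> = \<theta>" unfolding q_def by (simp add: pmf_bern_True)
        have "ennreal (beta_density 1 B \<theta>) * ennreal ((q \<theta> + b) ^ m) = ennreal (beta_density 1 B \<theta> * (\<theta> + b) ^ m)"
          using bd_nn[of \<theta>] True b by (simp add: qt ennreal_mult[symmetric])
        also have "\<dots> \<le> ennreal (2 ^ m * (beta_density 1 B \<theta> * \<theta> ^ m + b ^ m * beta_density 1 B \<theta>))"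
        proof (rule ennreal_leI)
          have "beta_density 1 B \<theta> * (\<theta> + b) ^ m \<le> beta_density 1 B \<theta> * (2 ^ m * (\<theta> ^ m + b ^ m))"
            using bd_nn[of \<theta>] pow_sum_le[of \<theta> b m] True b by (intro mult_left_mono) auto
          then show "beta_density 1 B \<theta> * (\<theta> + b) ^ m \<le> 2 ^ m * (beta_density 1 B \<theta> * \<theta> ^ m + b ^ m * beta_density 1 B \<theta>)"
            by (simp add: algebra_simps)
        qed
        also have "\<dots> = ennreal (2 ^ m) * (ennreal (beta_density 1 B \<theta>) * ennreal (\<theta> ^ m) + ennreal (b ^ m) * ennreal (beta_density 1 B \<theta>))"
          using bd_nn[of \<theta>] True b by (simp add: ennreal_mult[symmetric] ennreal_plus[symmetric] del: ennreal_plus)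
        finally show ?thesis .
      next
        case False
        then have "beta_density 1 B \<theta> = 0" by (auto simp: beta_density_def)
        then show ?thesis by simp
      qed
    qed
    also have "\<dots> = ennreal (2 ^ m) * ((\<integral>\<^sup>+\<theta>. ennreal (beta_density 1 B \<theta>) * ennreal (\<theta> ^ m) \<partial>lborel) + ennreal (b ^ m) * (\<integral>\<^sup>+\<theta>. ennreal (beta_density 1 B \<theta>) \<partial>lborel))"
      by (simp add: nn_integral_cmult nn_integral_add)
    also have "\<dots> \<le> ennreal (2 ^ m) * (ennreal (fact m / B ^ m) + ennreal (b ^ m) * 1)"
      using beta_moment[OF B, of m] beta_moment[OF B, of 0]
      by (intro mult_left_mono add_mono) auto
    finally show ?thesis by simp
  qed
  have "emeasure P E \<le> (\<integral>\<^sup>+\<theta>. (\<Sum>S\<in>Sm. ennreal ((q \<theta> + b) ^ m)) \<partial>BETA)"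
    using step1 step2 step3 nn_integral_mono[of BETA] unfolding q_def
    by (smt (verit) order_trans)
  also have "\<dots> = (\<Sum>S\<in>Sm. \<integral>\<^sup>+\<theta>. ennreal ((q \<theta> + b) ^ m) \<partial>BETA)"
    by (rule nn_integral_sum) (use qm in \<open>simp add: BETA_def\<close>)
  also have "\<dots> \<le> (\<Sum>S\<in>Sm. ennreal (2 ^ m) * (ennreal (fact m / B ^ m) + ennreal (b ^ m)))"
    by (intro sum_mono inner)
  also have "\<dots> = of_nat (p choose m) * (ennreal (2 ^ m) * (ennreal (fact m / B ^ m) + ennreal (b ^ m)))"
    unfolding Sm_def using n_subsets[of "{..<p}" m] by simp
  also have "\<dots> = ennreal (real (p choose m) * (2 ^ m * (fact m / B ^ m + b ^ m)))"
    using B b by (simp add: ennreal_mult ennreal_plus[symmetric] ennreal_of_nat_eq_real_of_nat del: ennreal_plus)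
  finally show ?thesis unfolding P_def E_def m_def b_def B_def .
qed



lemma final_n:
  fixes p s K nn :: nat and \<kappa> l0 l1 :: real
  assumes \<kappa>: "\<kappa> > 0" and K: "K \<ge> 1" and Kc: "real K * ln (ln (real p)) \<le> ln (real p)"
    and y2: "ln (ln (real p)) \<ge> 2"
    and E2: "((1 + \<kappa>) + ln (ln (ln (real p)))) / ln (ln (real p)) \<le> \<kappa> / 4"
    and E3: "ln 2 \<le> \<kappa> * ln (real p) / 4"
    and s1: "real s \<ge> 1" and E4: "ln 2 \<le> \<kappa> * real s / 4"
  shows "measure (ssl_prior p K \<kappa> l0 l1)
           {\<mu> \<in> space (ssl_prior p K \<kappa> l0 l1).
              real (card (supp_soft p K ((1 + \<kappa>) * ln (real p) / l0) \<mu>))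
                \<ge> 1 * (real s + real nn * ln (real K) / ln (real p))}
         \<le> exp (- (\<kappa> / 4) * (real s * ln (real p) + real nn * ln (real K)))"
proof -
  define L where "L = ln (real p)"
  define y where "y = ln L"
  have y: "y \<ge> 2" using y2 unfolding y_def L_def .
  have ppos: "real p > 0"
  proof (rule ccontr)
    assume "\<not> real p > 0" then have "real p = 0" by simp
    then show False using y unfolding y_def L_def by simp
  qed
  have L0: "L \<ge> 0" unfolding L_def using ppos by simp
  have L1: "L > 1"
  proof (rule ccontr)
    assume "\<not> L > 1"
    then have "y \<le> 0"
    proof (cases "L = 0")
      case False
      then have "L > 0" using L0 by simp
      then show ?thesis using \<open>\<not> L > 1\<close> unfolding y_def by simp
    qed (simp add: y_def)
    then show False using y by simp
  qed
  have eyL: "exp y = L" unfolding y_def using L1 by simp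
  have L: "L > 2"
  proof -
    have "exp 2 \<le> exp y" using y by simp
    then have "exp 2 \<le> L" using eyL by simp
    moreover have "(3::real) \<le> exp 2" using exp_ge_add_one_self[of 2] by simp
    ultimately show ?thesis by simp
  qed
  have pL: "real p = exp L" unfolding L_def using ppos by simp
  define T where "T = (1 + \<kappa>) * L"
  define \<delta> where "\<delta> = (1 + \<kappa>) * ln (real p) / l0"
  define c where "c = exp (- ((1 - 1 / y) * T / real K)) * y"
  have cpos: "c \<ge> 0" unfolding c_def using y by simp
  have Kpos: "K > 0" using K by simp
  have "\<exists>t\<ge>0. (\<integral>\<^sup>+z. ennreal (exp (t * \<bar>z\<bar> - t * \<delta> / real K)) \<partial>LAP l0) \<le> ennreal c"
  proof (cases "l0 > 0")
    case True
    define t where "t = l0 * (1 - 1 / y)"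
    have t0: "t \<ge> 0" "t < l0" unfolding t_def using True y by (auto simp: field_simps)
    have "(\<integral>\<^sup>+z. ennreal (exp (t * \<bar>z\<bar> - t * \<delta> / real K)) \<partial>LAP l0) \<le> ennreal (exp (- (t * \<delta> / real K)) * (l0 / (l0 - t)))"
      by (rule lap_coord[OF True t0])
    also have "exp (- (t * \<delta> / real K)) * (l0 / (l0 - t)) = c"
    proof -
      have "t * \<delta> = (1 - 1 / y) * T" unfolding t_def \<delta>_def T_def L_def using True by (simp add: field_simps)
      moreover have "l0 / (l0 - t) = y" unfolding t_def using True y by (simp add: field_simps)
      ultimately show ?thesis unfolding c_def by simp
    qed
    finally show ?thesis using t0 by blast
  next
    case False
    have "(\<integral>\<^sup>+z. ennreal (exp (0 * \<bar>z\<bar> - 0 * \<delta> / real K)) \<partial>LAP l0) = 0"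
      using False by (subst nn_integral_density) (auto simp: lap_nonpos)
    then show ?thesis by (intro exI[of _ 0]) simp
  qed
  then obtain t where t: "t \<ge> 0" and hc: "(\<integral>\<^sup>+z. ennreal (exp (t * \<bar>z\<bar> - t * \<delta> / real K)) \<partial>LAP l0) \<le> ennreal c"
    by blast
  define B where "B = beta_theta p \<kappa>"
  have B_eq: "B = exp ((1 + \<kappa>) * L) * L"
    unfolding B_def beta_theta_def L_def using ppos by (simp add: powr_def)
  have Bpos: "B > 0" unfolding B_eq using L by simp
  define x where "x = 1 * (real s + real nn * ln (real K) / ln (real p))"
  define m where "m = nat \<lceil>x\<rceil>"
  define b where "b = c ^ K"
  have b0: "b \<ge> 0" unfolding b_def using cpos by simp
  have emb: "emeasure (ssl_prior p K \<kappa> l0 l1) {\<mu> \<in> space (ssl_prior p K \<kappa> l0 l1). real (card (supp_soft p K \<delta> \<mu>)) \<ge> x}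
      \<le> ennreal (real (p choose m) * (2 ^ m * (fact m / B ^ m + b ^ m)))"
    unfolding m_def b_def B_def by (rule prior_bound[OF Kpos t cpos hc]) (use Bpos B_def in simp)
  define R where "R = real (p choose m) * (2 ^ m * (fact m / B ^ m + b ^ m))"
  have R0: "R \<ge> 0" unfolding R_def using Bpos b0 by simp
  have meas: "measure (ssl_prior p K \<kappa> l0 l1) {\<mu> \<in> space (ssl_prior p K \<kappa> l0 l1). real (card (supp_soft p K \<delta> \<mu>)) \<ge> x} \<le> R"
    unfolding measure_def R_def by (rule enn2real_leI) (use R0 emb in \<open>auto simp: R_def\<close>)
  define r where "r = exp (- \<kappa> * L / 2)"
  have r0: "r \<ge> 0" unfolding r_def by simp
  have h1: "2 * real p / B \<le> r"
  proof -
    have "2 * real p / B = (2 / L) * exp (- \<kappa> * L)"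
      unfolding B_eq pL using L by (simp add: field_simps exp_add[symmetric] exp_diff[symmetric] algebra_simps) 
    also have "\<dots> \<le> 1 * exp (- \<kappa> * L)" using L by (intro mult_right_mono) auto
    also have "\<dots> \<le> r" unfolding r_def using \<kappa> L by simp
    finally show ?thesis .
  qed
  have h2: "2 * real p * b \<le> r"
  proof -
    have yK: "y ^ K \<le> exp (L * ln y / y)"
    proof -
      have "y ^ K = exp (real K * ln y)" using y by (simp add: exp_of_nat_mult)
      also have "real K * ln y \<le> L * ln y / y"
      proof -
        have "real K \<le> L / y" using Kc y unfolding y_def L_def by (simp add: field_simps)
        then show ?thesis using y by (simp add: mult_right_mono divide_right_mono field_simps ln_ge_zero_iff)
      qed
      then have "exp (real K * ln y) \<le> exp (L * ln y / y)" by simp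
      finally show ?thesis .
    qed
    have bK: "b = exp (- ((1 - 1 / y) * T)) * y ^ K"
      unfolding b_def c_def using Kpos by (simp add: power_mult_distrib exp_of_nat_mult[symmetric])
    have "2 * real p * b \<le> 2 * exp L * (exp (- ((1 - 1 / y) * T)) * exp (L * ln y / y))"
      unfolding bK pL by (intro mult_left_mono yK) auto
    also have "\<dots> = exp (ln 2 + L - (1 - 1 / y) * T + L * ln y / y)"
      by (simp add: exp_add exp_diff exp_minus field_simps)
    also have "\<dots> \<le> r" unfolding r_def
    proof (subst exp_le_cancel_iff)
      have A: "(1 - 1 / y) * T = L + \<kappa> * L - (1 + \<kappa>) * L / y" unfolding T_def using y by (simp add: field_simps)
      have Bf: "(1 + \<kappa>) * L / y + L * ln y / y = L * (((1 + \<kappa>) + ln y) / y)" using y by (simp add: field_simps)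
      have C: "L * (((1 + \<kappa>) + ln y) / y) \<le> L * (\<kappa> / 4)" using E2 L unfolding y_def L_def by (intro mult_left_mono) auto
      have D: "ln 2 \<le> \<kappa> * L / 4" using E3 unfolding L_def .
      have C': "L * (\<kappa> / 4) = \<kappa> * L / 4" by simp
      show "ln 2 + L - (1 - 1 / y) * T + L * ln y / y \<le> - \<kappa> * L / 2" using A Bf C D C' by linarith
    qed
    finally show ?thesis .
  qed
  have Rle: "R \<le> (2 * real p / B) ^ m + (2 * real p * b) ^ m"
  proof -
    have f1: "real (p choose m) * fact m \<le> real p ^ m"
      using binomial_fact_pow[of p m] by (metis of_nat_fact of_nat_le_iff of_nat_mult of_nat_power)
    have f2: "real (p choose m) \<le> real p ^ m"
    proof -
      have "real (p choose m) = real (p choose m) * 1" by simp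
      also have "\<dots> \<le> real (p choose m) * fact m" by (intro mult_left_mono) (auto simp: fact_ge_1)
      also have "\<dots> \<le> real p ^ m" by (rule f1)
      finally show ?thesis .
    qed
    have "R = 2 ^ m * (real (p choose m) * fact m) / B ^ m + real (p choose m) * (2 ^ m * b ^ m)"
      unfolding R_def by (simp add: field_simps)
    also have "\<dots> \<le> 2 ^ m * real p ^ m / B ^ m + real p ^ m * (2 ^ m * b ^ m)"
      using f1 f2 Bpos b0 by (intro add_mono mult_right_mono divide_right_mono mult_left_mono) auto
    also have "\<dots> = (2 * real p / B) ^ m + (2 * real p * b) ^ m"
      by (simp add: power_mult_distrib power_divide)
    finally show ?thesis .
  qed
  also have "\<dots> \<le> r ^ m + r ^ m"
    using h1 h2 Bpos b0 by (intro add_mono power_mono) auto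
  also have "\<dots> = 2 * exp (- \<kappa> * (L * real m) / 2)"
    unfolding r_def by (simp add: exp_of_nat_mult[symmetric] algebra_simps)
  also have "\<dots> \<le> 2 * exp (- \<kappa> * (real s * ln (real p) + real nn * ln (real K)) / 2)"
  proof -
    have "x \<le> real m" unfolding m_def by linarith
    then have "L * x \<le> L * real m" using L by simp
    moreover have "L * x = real s * ln (real p) + real nn * ln (real K)"
      unfolding x_def L_def using L unfolding L_def by (simp add: field_simps)
    ultimately show ?thesis using \<kappa> by simp
  qed
  also have "\<dots> \<le> exp (- (\<kappa> / 4) * (real s * ln (real p) + real nn * ln (real K)))"
  proof -
    define \<Lambda> where "\<Lambda> = real s * ln (real p) + real nn * ln (real K)"
    have "real s \<le> \<Lambda>"
    proof -
      have "real s * 1 \<le> real s * ln (real p)" using L unfolding L_def by (intro mult_left_mono) auto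
      moreover have "0 \<le> real nn * ln (real K)" using K by simp
      ultimately show ?thesis unfolding \<Lambda>_def by simp
    qed
    then have "\<kappa> * real s / 4 \<le> \<kappa> * \<Lambda> / 4" using \<kappa> by (intro divide_right_mono mult_left_mono) auto
    then have "ln 2 \<le> \<kappa> * \<Lambda> / 4" using E4 by linarith
    then have "2 \<le> exp (\<kappa> * \<Lambda> / 4)" by (metis exp_ln exp_le_cancel_iff zero_less_numeral)
    then have "2 * exp (- \<kappa> * \<Lambda> / 2) \<le> exp (\<kappa> * \<Lambda> / 4) * exp (- \<kappa> * \<Lambda> / 2)" by simp
    also have "\<dots> = exp (- (\<kappa> / 4) * \<Lambda>)" by (simp add: exp_add[symmetric] field_simps)
    finally show ?thesis unfolding \<Lambda>_def .
  qed
  finally show ?thesis using meas unfolding \<delta>_def x_def by simp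
qed



theorem mainTheorem9:
  fixes p s K :: "nat \<Rightarrow> nat"
    and \<kappa> :: real
    and lam0 lam1 :: "nat \<Rightarrow> real"
  assumes kappa_pos: "\<kappa> > 0"
    and p_lim: "filterlim p at_top sequentially"
    and s_lim: "filterlim s at_top sequentially"
    and rate: "(\<lambda>n. (real (s n) + real n * ln (real (K n)) / ln (real (p n))) / real (p n))
                 \<longlonglongrightarrow> 0"
    and K_pos: "\<forall>n. K n \<ge> 1"
    and K_cond: "\<forall>n. real (K n) * ln (ln (real (p n))) \<le> ln (real (p n))"
    and lam1_pos: "\<forall>n. lam1 n > 0"
    and lam_ratio: "(\<lambda>n. lam1 n / lam0 n) \<longlonglongrightarrow> 0"
  shows "\<exists>\<beta>>0. \<exists>c>0. \<forall>\<^sub>F n in sequentially.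
           measure (ssl_prior (p n) (K n) \<kappa> (lam0 n) (lam1 n))
             {\<mu> \<in> space (ssl_prior (p n) (K n) \<kappa> (lam0 n) (lam1 n)).
                real (card (supp_soft (p n) (K n) ((1 + \<kappa>) * ln (real (p n)) / lam0 n) \<mu>))
                  \<ge> \<beta> * (real (s n) + real n * ln (real (K n)) / ln (real (p n)))}
           \<le> exp (- c * (real (s n) * ln (real (p n)) + real n * ln (real (K n))))"
proof -
  have rp: "filterlim (\<lambda>n. real (p n)) at_top sequentially"
    by (rule filterlim_compose[OF filterlim_real_sequentially p_lim])
  have Lp: "filterlim (\<lambda>n. ln (real (p n))) at_top sequentially"
    by (rule filterlim_compose[OF ln_at_top rp])
  have Yp: "filterlim (\<lambda>n. ln (ln (real (p n)))) at_top sequentially"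
    by (rule filterlim_compose[OF ln_at_top Lp])
  have rs: "filterlim (\<lambda>n. real (s n)) at_top sequentially"
    by (rule filterlim_compose[OF filterlim_real_sequentially s_lim])
  have E1: "\<forall>\<^sub>F n in sequentially. ln (ln (real (p n))) \<ge> 2"
    using Yp by (simp add: filterlim_at_top)
  have g0: "((\<lambda>y::real. ((1 + \<kappa>) + ln y) / y) \<longlongrightarrow> 0) at_top"
  proof -
    have a: "((\<lambda>y::real. (1 + \<kappa>) / y) \<longlongrightarrow> 0) at_top"
      by (rule tendsto_divide_0[OF tendsto_const filterlim_ident[THEN filterlim_at_top_imp_at_infinity]])
    have b: "((\<lambda>y::real. ln y / y) \<longlongrightarrow> 0) at_top" by real_asymp
    have "((\<lambda>y::real. (1 + \<kappa>) / y + ln y / y) \<longlongrightarrow> 0 + 0) at_top"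
      by (rule tendsto_add[OF a b])
    then show ?thesis by (simp add: add_divide_distrib)
  qed
  have "\<forall>\<^sub>F y in at_top. ((1 + \<kappa>) + ln y) / y < \<kappa> / 4"
    using order_tendstoD(2)[OF g0, of "\<kappa> / 4"] kappa_pos by simp
  then have E2: "\<forall>\<^sub>F n in sequentially. ((1 + \<kappa>) + ln (ln (ln (real (p n))))) / ln (ln (real (p n))) \<le> \<kappa> / 4"
    using eventually_compose_filterlim[OF _ Yp] by (smt (verit) eventually_mono)
  have E3: "\<forall>\<^sub>F n in sequentially. ln 2 \<le> \<kappa> * ln (real (p n)) / 4"
  proof -
    have "\<forall>\<^sub>F n in sequentially. 4 * ln 2 / \<kappa> \<le> ln (real (p n))"
      using Lp by (simp add: filterlim_at_top)
    then show ?thesis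
      by (rule eventually_mono) (use kappa_pos in \<open>simp add: field_simps\<close>)
  qed
  have E4: "\<forall>\<^sub>F n in sequentially. 1 \<le> real (s n) \<and> ln 2 \<le> \<kappa> * real (s n) / 4"
  proof -
    have "\<forall>\<^sub>F n in sequentially. max 1 (4 * ln 2 / \<kappa>) \<le> real (s n)"
      using rs unfolding filterlim_at_top by blast
    then show ?thesis
      by (rule eventually_mono) (use kappa_pos in \<open>auto simp: field_simps\<close>)
  qed
  have ev: "\<forall>\<^sub>F n in sequentially.
           measure (ssl_prior (p n) (K n) \<kappa> (lam0 n) (lam1 n))
             {\<mu> \<in> space (ssl_prior (p n) (K n) \<kappa> (lam0 n) (lam1 n)).
                real (card (supp_soft (p n) (K n) ((1 + \<kappa>) * ln (real (p n)) / lam0 n) \<mu>))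
                  \<ge> 1 * (real (s n) + real n * ln (real (K n)) / ln (real (p n)))}
           \<le> exp (- (\<kappa> / 4) * (real (s n) * ln (real (p n)) + real n * ln (real (K n))))"
    using E1 E2 E3 E4
  proof eventually_elim
    case (elim n)
    then show ?case
      using final_n[OF kappa_pos K_pos[rule_format, of n] K_cond[rule_format, of n]] by blast
  qed
  have "(1::real) > 0" "\<kappa> / 4 > 0" using kappa_pos by auto
  then show ?thesis using ev by blast
qed

end
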